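(* Let $M\in\mathrm{M}_n(\mathbb{K})$ be a cyclic matrix with minimal polynomial $f=f_1^{m_1}\cdots f_s^{m_s}$, where $f_1,\dots,f_s\in\mathbb{K}[x]$ are pairwise distinct monic irreducible polynomials and $m_i\ge1$. Let $\mathcal{C}\subseteq\mathbb{L}^n$ be a nonzero $M$-cyclic code of dimension $k$ with generator polynomial $g$. Then $M_k(\mathcal{C})=n$ if and only if $f_i\nmid g$ for all $i\in\{1,\dots,s\}$.
   Context: Let $\mathbb{L}/\mathbb{K}$ be a field extension of finite degree $m\ge n$. Vectors are row vectors. For $c=(c_1,\dots,c_n)\in\mathbb{L}^n$, $\mathrm{Rsupp}(c)\subseteq\mathbb{K}^n$ is the $\mathbb{K}$-row space of the $m\times n$ matrix over $\mathbb{K}$ whose $j$-th column is the coordinate vector of $c_j$ in a fixed $\mathbb{K}$-basis of $\mathbb{L}$; for an $\mathbb{L}$-subspace $\mathcal{D}$, $\mathrm{wt}_R(\mathcal{D})$ is the $\mathbb{K}$-dimension of the span of all $\mathrm{Rsupp}(d)$, $d\in\mathcal{D}$. For a $k$-dimensional $\mathbb{L}$-subspace $\mathcal{C}$ and $1\le r\le k$, $M_r(\mathcal{C})=\min\{\mathrm{wt}_R(\mathcal{D}):\mathcal{D}\subseteq\mathcal{C},\dim_{\mathbb{L}}\mathcal{D}=r\}$. A matrix $M\in\mathrm{M}_n(\mathbb{K})$ is cyclic if there is $v\in\mathbb{K}^n$ (a cyclic vector) with $(v,vM^t,\dots,v(M^t)^{n-1})$ a basis; equivalently its minimal polynomial $f$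 has degree $n$. An $M$-cyclic code is an $\mathbb{L}$-subspace $\mathcal{C}\subseteq\mathbb{L}^n$ with $cM^t\in\mathcal{C}$ for all $c\in\mathcal{C}$; each equals $\mathcal{C}_g=\{v\,g(M)^tP(M)^t:P\in\mathbb{L}[x]\}$ for a unique monic divisor $g$ of $f$ in $\mathbb{L}[x]$ (its generator polynomial), and $\dim\mathcal{C}_g=n-\deg g$. *)

theory Defs
  imports "HOL-Analysis.Analysis" "HOL-Computational_Algebra.Polynomial"
begin

text \<open>K is modelled by a field type 'k, L by a field type 'l together with an
  injective ring homomorphism phi : 'k => 'l (the inclusion of K into L).\<close>

definition field_embedding :: "('k::field \<Rightarrow> 'l::field) \<Rightarrow> bool" where
  "field_embedding \<phi> \<longleftrightarrow> inj \<phi> \<and> \<phi> 1 = 1 \<and>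
     (\<forall>a b. \<phi> (a + b) = \<phi> a + \<phi> b) \<and> (\<forall>a b. \<phi> (a * b) = \<phi> a * \<phi> b)"

definition is_K_basis :: "('k::field \<Rightarrow> 'l::field) \<Rightarrow> (nat \<Rightarrow> 'l) \<Rightarrow> nat \<Rightarrow> bool" where
  "is_K_basis \<phi> b m \<longleftrightarrow>
     (\<forall>x. \<exists>!a :: nat \<Rightarrow> 'k. (\<forall>i. m \<le> i \<longrightarrow> a i = 0) \<and> x = (\<Sum>i<m. \<phi> (a i) * b i))"

definition coords :: "('k::field \<Rightarrow> 'l::field) \<Rightarrow> (nat \<Rightarrow> 'l) \<Rightarrow> nat \<Rightarrow> 'l \<Rightarrow> nat \<Rightarrow> 'k" where
  "coords \<phi> b m x = (THE a. (\<forall>i. m \<le> i \<longrightarrow> a i = 0) \<and> x = (\<Sum>i<m. \<phi> (a i) * b i))"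

definition Rsupp :: "('k::field \<Rightarrow> 'l::field) \<Rightarrow> (nat \<Rightarrow> 'l) \<Rightarrow> nat \<Rightarrow> 'l^'n \<Rightarrow> ('k^'n) set" where
  "Rsupp \<phi> b m c = vec.span {(\<chi> j. coords \<phi> b m (c $ j) i) | i. i < m}"

definition wtR :: "('k::field \<Rightarrow> 'l::field) \<Rightarrow> (nat \<Rightarrow> 'l) \<Rightarrow> nat \<Rightarrow> ('l^'n) set \<Rightarrow> nat" where
  "wtR \<phi> b m D = vec.dim (vec.span (\<Union>d\<in>D. Rsupp \<phi> b m d))"

definition Mr :: "('k::field \<Rightarrow> 'l::field) \<Rightarrow> (nat \<Rightarrow> 'l) \<Rightarrow> nat \<Rightarrow> nat \<Rightarrow> ('l^'n) set \<Rightarrow> nat" where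
  "Mr \<phi> b m r C = Min {wtR \<phi> b m D | D. vec.subspace D \<and> D \<subseteq> C \<and> vec.dim D = r}"

definition mat_pow :: "'a::comm_ring_1^'n^'n \<Rightarrow> nat \<Rightarrow> 'a^'n^'n" where
  "mat_pow A i = ((\<lambda>X. A ** X) ^^ i) (mat 1)"

definition mat_scale :: "'a::comm_ring_1 \<Rightarrow> 'a^'n^'n \<Rightarrow> 'a^'n^'n" where
  "mat_scale c A = (\<chi> i j. c * A $ i $ j)"

definition poly_mat :: "'a::comm_ring_1 poly \<Rightarrow> 'a^'n^'n \<Rightarrow> 'a^'n^'n" where
  "poly_mat p A = (\<Sum>i\<le>degree p. mat_scale (coeff p i) (mat_pow A i))"

definition minimal_polynomial :: "'a::field^'n^'n \<Rightarrow> 'a poly \<Rightarrow> bool" where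
  "minimal_polynomial A f \<longleftrightarrow> lead_coeff f = 1 \<and> poly_mat f A = 0 \<and>
     (\<forall>q. poly_mat q A = 0 \<longrightarrow> f dvd q)"

text \<open>v is a cyclic vector: (v, v M^t, ..., v (M^t)^(n-1)) is a basis of K^n
  (row vectors; v (M^t)^i is M^i *v v).\<close>
definition cyclic_vector :: "'a::field^'n^'n \<Rightarrow> 'a^'n \<Rightarrow> bool" where
  "cyclic_vector A v \<longleftrightarrow> inj_on (\<lambda>i. mat_pow A i *v v) {..<CARD('n)} \<and>
     vec.independent ((\<lambda>i. mat_pow A i *v v) ` {..<CARD('n)}) \<and>
     vec.span ((\<lambda>i. mat_pow A i *v v) ` {..<CARD('n)}) = UNIV"

definition cyclic_matrix :: "'a::field^'n^'n \<Rightarrow> bool" where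
  "cyclic_matrix A \<longleftrightarrow> (\<exists>v. cyclic_vector A v)"

definition map_mat :: "('k \<Rightarrow> 'l) \<Rightarrow> 'k^'n^'n \<Rightarrow> 'l^'n^'n" where
  "map_mat \<phi> A = (\<chi> i j. \<phi> (A $ i $ j))"

definition map_vec :: "('k \<Rightarrow> 'l) \<Rightarrow> 'k^'n \<Rightarrow> 'l^'n" where
  "map_vec \<phi> v = (\<chi> j. \<phi> (v $ j))"

definition M_cyclic_code :: "('k::field \<Rightarrow> 'l::field) \<Rightarrow> 'k^'n^'n \<Rightarrow> ('l^'n) set \<Rightarrow> bool" where
  "M_cyclic_code \<phi> A C \<longleftrightarrow> vec.subspace C \<and> (\<forall>c\<in>C. map_mat \<phi> A *v c \<in> C)"

text \<open>C_g = { v g(M)^t P(M)^t : P in L[x] } for a cyclic vector v;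
  v g(M)^t P(M)^t = (P(M) g(M)) *v v.\<close>
definition code_of_gen :: "('k::field \<Rightarrow> 'l::field) \<Rightarrow> 'k^'n^'n \<Rightarrow> 'k^'n \<Rightarrow> 'l poly \<Rightarrow> ('l^'n) set" where
  "code_of_gen \<phi> A v g =
     {(poly_mat P (map_mat \<phi> A) ** poly_mat g (map_mat \<phi> A)) *v map_vec \<phi> v | P. True}"

definition generator_polynomial ::
  "('k::field \<Rightarrow> 'l::field) \<Rightarrow> 'k^'n^'n \<Rightarrow> 'k^'n \<Rightarrow> 'k poly \<Rightarrow> ('l^'n) set \<Rightarrow> 'l poly \<Rightarrow> bool" where
  "generator_polynomial \<phi> A v f C g \<longleftrightarrow>
     lead_coeff g = 1 \<and> g dvd map_poly \<phi> f \<and> C = code_of_gen \<phi> A v g"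

end

theory Submission
  imports Defs
begin

lemma mat_pow_0[simp]: "mat_pow A 0 = mat 1"
  by (simp add: mat_pow_def)
lemma mat_pow_Suc: "mat_pow A (Suc i) = A ** mat_pow A i"
  by (simp add: mat_pow_def)

lemma mat_scale_eq: "mat_scale c A = mat c ** (A::'a::comm_ring_1^'n^'n)"
  unfolding matrix_matrix_mult_def mat_def mat_scale_def
  by (auto simp: vec_eq_iff if_distrib if_distribR sum.delta'[OF finite] cong: if_cong)

lemma mat_scale_eq2: "mat_scale c A = A ** (mat c::'a::comm_ring_1^'n^'n)"
  unfolding matrix_matrix_mult_def mat_def mat_scale_def
  by (auto simp: vec_eq_iff if_distrib if_distribR sum.delta[OF finite] mult.commute cong: if_cong)

lemma mat_comm: "mat c ** (A::'a::comm_ring_1^'n^'n) = A ** mat c"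
  using mat_scale_eq[of c A] mat_scale_eq2[of c A] by simp

lemma matrix_add_rdistrib: "(B + C) ** (A::'a::comm_ring_1^'n^'n) = B ** A + C ** A"
  by (simp add: matrix_matrix_mult_def vec_eq_iff distrib_right sum.distrib)

lemma matrix_mul_sum: "(A::'a::comm_ring_1^'n^'n) ** sum f S = (\<Sum>i\<in>S. A ** f i)"
  by (induct S rule: infinite_finite_induct) (simp_all add: matrix_add_ldistrib)

lemma mat_add: "mat (a + b) = mat a + (mat b::'a::comm_ring_1^'n^'n)"
  by (simp add: mat_def vec_eq_iff)

lemma mat_mult: "mat (a * b) = mat a ** (mat b::'a::comm_ring_1^'n^'n)"
proof -
  have "mat (a * b) = mat_scale a (mat b::'a^'n^'n)" by (simp add: mat_scale_def mat_def vec_eq_iff)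
  then show ?thesis by (simp only: mat_scale_eq)
qed

lemma mat_comm2: "mat c ** ((A::'a::comm_ring_1^'n^'n) ** B) = A ** (mat c ** (B::'a::comm_ring_1^'n^'n))"
proof -
  have "mat c ** (A ** B) = (mat c ** A) ** B" by (rule matrix_mul_assoc)
  also have "\<dots> = (A ** mat c) ** B" by (subst mat_comm) (rule refl)
  also have "\<dots> = A ** (mat c ** B)" by (rule matrix_mul_assoc[symmetric])
  finally show ?thesis .
qed

lemma poly_mat_sum_bound:
  assumes "degree p < N"
  shows "poly_mat p (A::'a::comm_ring_1^'n^'n) = (\<Sum>i<N. mat_scale (coeff p i) (mat_pow A i))"
proof -
  have "poly_mat p A = (\<Sum>i\<in>{..degree p}. mat_scale (coeff p i) (mat_pow A i))"
    by (simp add: poly_mat_def)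
  also have "\<dots> = (\<Sum>i<N. mat_scale (coeff p i) (mat_pow A i))"
  proof (rule sum.mono_neutral_left)
    show "finite {..<N}" by simp
    show "{..degree p} \<subseteq> {..<N}" using assms by auto
    show "\<forall>i\<in>{..<N} - {..degree p}. mat_scale (coeff p i) (mat_pow A i) = 0"
    proof
      fix i assume "i \<in> {..<N} - {..degree p}"
      then have "coeff p i = 0" by (intro coeff_eq_0) auto
      then show "mat_scale (coeff p i) (mat_pow A i) = 0" by (simp add: mat_scale_def vec_eq_iff)
    qed
  qed
  finally show ?thesis .
qed

lemma poly_mat_0[simp]: "poly_mat 0 A = 0"
  by (simp add: poly_mat_def mat_scale_def vec_eq_iff)

lemma poly_mat_add: "poly_mat (p + q) (A::'a::comm_ring_1^'n^'n) = poly_mat p A + poly_mat q A"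
proof -
  define N where "N = Suc (max (degree p) (degree q))"
  have N: "degree p < N" "degree q < N" "degree (p+q) < N"
    using degree_add_le_max[of p q] by (auto simp: N_def)
  show ?thesis
    unfolding poly_mat_sum_bound[OF N(1)] poly_mat_sum_bound[OF N(2)] poly_mat_sum_bound[OF N(3)]
    by (simp add: mat_scale_eq mat_add matrix_add_rdistrib sum.distrib)
qed

lemma poly_mat_smult: "poly_mat (smult c p) (A::'a::comm_ring_1^'n^'n) = mat c ** poly_mat p A"
proof -
  define N where "N = Suc (degree p)"
  have N: "degree p < N" "degree (smult c p) < N"
    using degree_smult_le[of c p] by (auto simp: N_def)
  show ?thesis
    unfolding poly_mat_sum_bound[OF N(1)] poly_mat_sum_bound[OF N(2)]
    by (simp add: mat_scale_eq mat_mult matrix_mul_sum matrix_mul_assoc)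
qed

lemma poly_mat_pCons0: "poly_mat (pCons 0 p) (A::'a::comm_ring_1^'n^'n) = A ** poly_mat p A"
proof -
  define N where "N = Suc (degree p)"
  have N: "degree p < N" "degree (pCons 0 p) < Suc N"
    by (auto simp: N_def degree_pCons_le intro: le_less_trans[OF degree_pCons_le])
  show ?thesis
    unfolding poly_mat_sum_bound[OF N(1)] poly_mat_sum_bound[OF N(2)] sum.lessThan_Suc_shift
    by (simp add: mat_scale_eq mat_pow_Suc matrix_mul_sum mat_comm2)
qed

lemma poly_mat_const: "poly_mat [:a:] (A::'a::comm_ring_1^'n^'n) = mat a"
  by (simp add: poly_mat_def mat_scale_eq)

lemma poly_mat_pCons: "poly_mat (pCons a p) (A::'a::comm_ring_1^'n^'n) = mat a + A ** poly_mat p A"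
proof -
  have "pCons a p = [:a:] + pCons 0 p" by simp
  then show ?thesis by (simp only: poly_mat_add poly_mat_const poly_mat_pCons0)
qed

lemma poly_mat_mult: "poly_mat (p * q) (A::'a::comm_ring_1^'n^'n) = poly_mat p A ** poly_mat q A"
proof (induct p)
  case 0
  then show ?case by simp
next
  case (pCons a p)
  have eq: "pCons a p * q = smult a q + pCons 0 (p * q)" by (simp add: mult_pCons_left)
  have "poly_mat (pCons a p * q) A = poly_mat (smult a q) A + poly_mat (pCons 0 (p*q)) A"
    by (simp only: eq poly_mat_add)
  also have "\<dots> = mat a ** poly_mat q A + A ** (poly_mat p A ** poly_mat q A)"
    by (simp only: poly_mat_smult poly_mat_pCons0 pCons(2))
  also have "\<dots> = (mat a + A ** poly_mat p A) ** poly_mat q A"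
    by (simp only: matrix_add_rdistrib matrix_mul_assoc)
  also have "\<dots> = poly_mat (pCons a p) A ** poly_mat q A"
    by (simp only: poly_mat_pCons)
  finally show ?case .
qed

lemma poly_mat_comm: "poly_mat p (A::'a::comm_ring_1^'n^'n) ** poly_mat q A = poly_mat q A ** poly_mat p A"
  by (metis poly_mat_mult mult.commute)

lemma poly_mat_1[simp]: "poly_mat 1 (A::'a::comm_ring_1^'n^'n) = mat 1"
  using poly_mat_const[of 1 A] by (simp add: one_pCons)

lemma poly_mat_monom: "poly_mat (monom 1 j) (A::'a::comm_ring_1^'n^'n) = mat_pow A j"
proof (induct j)
  case 0
  then show ?case by (simp add: monom_0 poly_mat_const)
next
  case (Suc j)
  then show ?case by (simp add: monom_Suc poly_mat_pCons0 mat_pow_Suc)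
qed

lemma poly_mat_sum: "poly_mat (\<Sum>i\<in>S. p i) (A::'a::comm_ring_1^'n^'n) = (\<Sum>i\<in>S. poly_mat (p i) A)"
  by (induct S rule: infinite_finite_induct) (simp_all add: poly_mat_add)



lemma fe_hom:
  assumes "field_embedding \<phi>"
  shows fe_0: "\<phi> 0 = 0" and fe_1: "\<phi> 1 = 1" and fe_add: "\<phi> (a + b) = \<phi> a + \<phi> b"
    and fe_mult: "\<phi> (a * b) = \<phi> a * \<phi> b" and fe_inj: "inj \<phi>"
  using assms unfolding field_embedding_def
  by (auto simp: add.commute[of "\<phi> 0"] dest: spec[of _ 0])

lemma fe_sum:
  assumes "field_embedding \<phi>"
  shows "\<phi> (sum f S) = (\<Sum>x\<in>S. \<phi> (f x))"
  by (induct S rule: infinite_finite_induct) (simp_all add: fe_0[OF assms] fe_add[OF assms])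

lemma fe_eq0:
  assumes "field_embedding \<phi>"
  shows "\<phi> a = 0 \<longleftrightarrow> a = 0"
  using fe_inj[OF assms] fe_0[OF assms] by (metis injD)

lemma map_mat_mult:
  assumes "field_embedding \<phi>"
  shows "map_mat \<phi> (A ** B) = map_mat \<phi> A ** map_mat \<phi> B"
  by (simp add: map_mat_def matrix_matrix_mult_def vec_eq_iff fe_sum[OF assms] fe_mult[OF assms])

lemma map_mat_add:
  assumes "field_embedding \<phi>"
  shows "map_mat \<phi> (A + B) = map_mat \<phi> A + map_mat \<phi> B"
  by (simp add: map_mat_def vec_eq_iff fe_add[OF assms])

lemma map_mat_0:
  assumes "field_embedding \<phi>"
  shows "map_mat \<phi> 0 = 0"
  by (simp add: map_mat_def vec_eq_iff fe_0[OF assms])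

lemma map_mat_sum:
  assumes "field_embedding \<phi>"
  shows "map_mat \<phi> (sum f S) = (\<Sum>x\<in>S. map_mat \<phi> (f x))"
  by (induct S rule: infinite_finite_induct) (simp_all add: map_mat_0[OF assms] map_mat_add[OF assms])

lemma map_mat_mat:
  assumes "field_embedding \<phi>"
  shows "map_mat \<phi> (mat c) = mat (\<phi> c)"
  by (simp add: map_mat_def mat_def vec_eq_iff fe_0[OF assms])

lemma map_mat_pow:
  assumes "field_embedding \<phi>"
  shows "map_mat \<phi> (mat_pow A i) = mat_pow (map_mat \<phi> A) i"
  by (induct i) (simp_all add: mat_pow_Suc map_mat_mult[OF assms] map_mat_mat[OF assms] fe_1[OF assms])

lemma map_mat_scale:
  assumes "field_embedding \<phi>"
  shows "map_mat \<phi> (mat_scale c A) = mat_scale (\<phi> c) (map_mat \<phi> A)"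
  by (simp add: map_mat_def mat_scale_def vec_eq_iff fe_mult[OF assms])

lemma poly_mat_map:
  assumes "field_embedding \<phi>"
  shows "poly_mat (map_poly \<phi> p) (map_mat \<phi> A) = map_mat \<phi> (poly_mat p (A::'a::field^'n^'n))"
proof -
  have N: "degree p < Suc (degree p)" "degree (map_poly \<phi> p) < Suc (degree p)"
    using map_poly_degree_leq[of \<phi> p] by auto
  show ?thesis
    unfolding poly_mat_sum_bound[OF N(1)] poly_mat_sum_bound[OF N(2)] map_mat_sum[OF assms]
    by (simp add: map_mat_scale[OF assms] map_mat_pow[OF assms]
        coeff_map_poly fe_0[OF assms])
qed

lemma map_mat_vec:
  assumes "field_embedding \<phi>"
  shows "map_mat \<phi> A *v map_vec \<phi> v = map_vec \<phi> (A *v v)"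
  by (simp add: map_mat_def map_vec_def matrix_vector_mult_def vec_eq_iff fe_sum[OF assms] fe_mult[OF assms])

lemma map_poly_add':
  assumes "field_embedding \<phi>"
  shows "map_poly \<phi> (p + q) = map_poly \<phi> p + map_poly \<phi> q"
  by (rule poly_eqI) (simp add: coeff_map_poly fe_0[OF assms] fe_add[OF assms])

lemma map_poly_mult':
  assumes "field_embedding \<phi>"
  shows "map_poly \<phi> (p * q) = map_poly \<phi> p * map_poly \<phi> q"
  by (rule poly_eqI) (simp add: coeff_map_poly fe_0[OF assms] coeff_mult fe_sum[OF assms] fe_mult[OF assms])

lemma map_poly_dvd:
  assumes "field_embedding \<phi>" "p dvd q"
  shows "map_poly \<phi> p dvd map_poly \<phi> q"
  using assms(2) by (auto simp: map_poly_mult'[OF assms(1)] elim!: dvdE)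



definition dotK :: "'k::field^'n \<Rightarrow> 'k^'n \<Rightarrow> 'k" where
  "dotK w u = (\<Sum>j\<in>UNIV. w$j * u$j)"

definition dotL :: "('k::field \<Rightarrow> 'l::field) \<Rightarrow> 'k^'n \<Rightarrow> 'l^'n \<Rightarrow> 'l" where
  "dotL \<phi> w y = (\<Sum>j\<in>UNIV. \<phi> (w$j) * y$j)"

definition rowc :: "('k::field \<Rightarrow> 'l::field) \<Rightarrow> (nat \<Rightarrow> 'l) \<Rightarrow> nat \<Rightarrow> 'l^'n \<Rightarrow> nat \<Rightarrow> 'k^'n" where
  "rowc \<phi> b m c i = (\<chi> j. coords \<phi> b m (c $ j) i)"

lemma coords_spec:
  assumes "is_K_basis \<phi> b m"
  shows "(\<forall>i. m \<le> i \<longrightarrow> coords \<phi> b m x i = 0) \<and> x = (\<Sum>i<m. \<phi> (coords \<phi> b m x i) * b i)"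
  unfolding coords_def
  by (rule theI'[OF assms[unfolded is_K_basis_def, rule_format]])

lemma uniq2: "Ex1 P \<Longrightarrow> P x \<Longrightarrow> P y \<Longrightarrow> x = y" by blast

lemma coords_unique0:
  assumes fe: "field_embedding \<phi>" and basis: "is_K_basis \<phi> b m"
    and s: "(\<Sum>i<m. \<phi> (a i) * b i) = 0" and i: "i < m"
  shows "a i = 0"
proof -
  define a' where "a' = (\<lambda>i. if i < m then a i else 0)"
  define P where "P = (\<lambda>a. (\<forall>i. m \<le> i \<longrightarrow> a i = 0) \<and> 0 = (\<Sum>i<m. \<phi> (a i) * b i))"
  have ex: "Ex1 P"
    unfolding P_def by (rule basis[unfolded is_K_basis_def, rule_format])
  have "(\<Sum>i<m. \<phi> (a' i) * b i) = (\<Sum>i<m. \<phi> (a i) * b i)"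
    by (rule sum.cong) (auto simp: a'_def)
  then have Pa': "P a'"
    using s unfolding P_def by (auto simp: a'_def)
  have P0: "P (\<lambda>_. 0)"
    unfolding P_def by (simp add: fe_0[OF fe])
  have "a' = (\<lambda>_. 0)"
    using ex Pa' P0 unfolding Ex1_def by blast
  then have "a' i = 0" by simp
  then show ?thesis using i by (simp add: a'_def)
qed

lemma dotL_coords:
  assumes fe: "field_embedding \<phi>" and basis: "is_K_basis \<phi> b m"
  shows "dotL \<phi> w c = (\<Sum>i<m. \<phi> (dotK w (rowc \<phi> b m c i)) * b i)"
proof -
  have "dotL \<phi> w c = (\<Sum>j\<in>UNIV. \<phi> (w$j) * (\<Sum>i<m. \<phi> (coords \<phi> b m (c$j) i) * b i))"
    unfolding dotL_def
  proof (rule sum.cong[OF refl])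
    fix j
    have cj: "c$j = (\<Sum>i<m. \<phi> (coords \<phi> b m (c$j) i) * b i)"
      using coords_spec[OF basis] by blast
    show "\<phi> (w$j) * c$j = \<phi> (w$j) * (\<Sum>i<m. \<phi> (coords \<phi> b m (c$j) i) * b i)"
      by (rule arg_cong[OF cj])
  qed
  also have "\<dots> = (\<Sum>j\<in>UNIV. \<Sum>i<m. \<phi> (w$j * coords \<phi> b m (c$j) i) * b i)"
    by (simp add: sum_distrib_left fe_mult[OF fe] mult.assoc)
  also have "\<dots> = (\<Sum>i<m. \<Sum>j\<in>UNIV. \<phi> (w$j * coords \<phi> b m (c$j) i) * b i)"
    by (rule sum.swap)
  also have "\<dots> = (\<Sum>i<m. \<phi> (dotK w (rowc \<phi> b m c i)) * b i)"
    by (simp add: dotK_def rowc_def fe_sum[OF fe] sum_distrib_right)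
  finally show ?thesis .
qed

lemma dotK_subspace: "vec.subspace {u. dotK w u = 0}"
  unfolding vec.subspace_def
  by (simp add: dotK_def sum.distrib distrib_left mult.left_commute flip: sum_distrib_left)

lemma Rsupp_rowc: "Rsupp \<phi> b m c = vec.span {rowc \<phi> b m c i | i. i < m}"
  by (simp add: Rsupp_def rowc_def)

lemma perp_span:
  assumes fe: "field_embedding \<phi>" and basis: "is_K_basis \<phi> b m"
    and perp: "\<forall>c\<in>C. dotL \<phi> w c = 0"
  shows "vec.span (\<Union>c\<in>C. Rsupp \<phi> b m c) \<subseteq> {u. dotK w u = 0}"
proof (rule vec.span_minimal[OF _ dotK_subspace])
  show "(\<Union>c\<in>C. Rsupp \<phi> b m c) \<subseteq> {u. dotK w u = 0}"
  proof (rule UN_least)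
    fix c assume c: "c \<in> C"
    show "Rsupp \<phi> b m c \<subseteq> {u. dotK w u = 0}"
      unfolding Rsupp_rowc
    proof (rule vec.span_minimal[OF _ dotK_subspace], safe)
      fix i assume i: "i < m"
      have "(\<Sum>i<m. \<phi> (dotK w (rowc \<phi> b m c i)) * b i) = 0"
        using perp c dotL_coords[OF fe basis, of w c] by simp
      from coords_unique0[OF fe basis this i] show "dotK w (rowc \<phi> b m c i) = 0" .
    qed
  qed
qed

lemma perp_code:
  assumes fe: "field_embedding \<phi>" and basis: "is_K_basis \<phi> b m"
    and sub: "vec.span (\<Union>c\<in>C. Rsupp \<phi> b m c) \<subseteq> {u. dotK w u = 0}" and c: "c \<in> C"
  shows "dotL \<phi> w c = 0"
proof -
  have "\<forall>i<m. dotK w (rowc \<phi> b m c i) = 0"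
  proof safe
    fix i assume "i < m"
    then have "rowc \<phi> b m c i \<in> Rsupp \<phi> b m c"
      unfolding Rsupp_rowc by (intro vec.span_base) blast
    then have "rowc \<phi> b m c i \<in> vec.span (\<Union>c\<in>C. Rsupp \<phi> b m c)"
      using c by (intro vec.span_base) blast
    then show "dotK w (rowc \<phi> b m c i) = 0" using sub by blast
  qed
  then show ?thesis by (simp add: dotL_coords[OF fe basis] fe_0[OF fe])
qed



lemma dotK_transpose: "dotK w (F *v y) = dotK (transpose F *v w) (y::'a::field^'n)"
proof -
  have "dotK w (F *v y) = (\<Sum>j\<in>UNIV. \<Sum>k\<in>UNIV. w$j * (F$j$k * y$k))"
    by (simp add: dotK_def matrix_vector_mult_def sum_distrib_left)
  also have "\<dots> = (\<Sum>k\<in>UNIV. \<Sum>j\<in>UNIV. w$j * (F$j$k * y$k))"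
    by (rule sum.swap)
  also have "\<dots> = (\<Sum>k\<in>UNIV. (\<Sum>j\<in>UNIV. F$j$k * w$j) * y$k)"
    by (rule sum.cong[OF refl]) (subst sum_distrib_right, simp add: mult_ac)
  also have "\<dots> = dotK (transpose F *v w) y"
    unfolding dotK_def matrix_vector_mult_def transpose_def by simp
  finally show ?thesis .
qed

lemma dotK_axis: "dotK w (axis j 1) = w $ j"
  by (simp add: dotK_def axis_def if_distrib sum.delta' cong: if_cong)

lemma dotK_0[simp]: "dotK 0 y = 0"
  by (simp add: dotK_def)

lemma left_kernel:
  fixes F :: "'a::field^'n^'n"
  assumes "\<not> (\<exists>G. G ** F = mat 1)"
  shows "\<exists>w. w \<noteq> 0 \<and> (\<forall>y. dotK w (F *v y) = 0)"
proof -
  have "\<not> (\<exists>B. B ** transpose F = mat 1)"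
  proof
    assume "\<exists>B. B ** transpose F = mat 1"
    then obtain B where "B ** transpose F = mat 1" by blast
    then have "transpose (B ** transpose F) = mat 1" by simp
    then have "F ** transpose B = mat 1" by (simp add: matrix_transpose_mul)
    then have "transpose B ** F = mat 1" using matrix_left_right_inverse by blast
    then show False using assms by blast
  qed
  then obtain x where x: "transpose F *v x = 0" "x \<noteq> 0"
    unfolding matrix_left_invertible_ker by blast
  have "\<forall>y. dotK x (F *v y) = 0"
  proof
    fix y
    have "dotK x (F *v y) = dotK (transpose F *v x) y" by (rule dotK_transpose)
    also have "\<dots> = 0" by (simp only: x(1) dotK_0)
    finally show "dotK x (F *v y) = 0" .
  qed
  then show ?thesis using x(2) by blast
qed

lemma perp_exists:
  fixes W :: "('a::field^'n) set"
  assumes "vec.dim W < CARD('n)"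
  shows "\<exists>w. w \<noteq> 0 \<and> (\<forall>u\<in>W. dotK w u = 0)"
proof -
  obtain B where B: "B \<subseteq> W" "vec.independent B" "W \<subseteq> vec.span B" "card B = vec.dim W"
    using vec.basis_exists by blast
  have finB: "finite B" using B(2) vec.finiteI_independent by blast
  have "card B \<le> card (UNIV::'n set)" using B(4) assms by simp
  then obtain e :: "'a^'n \<Rightarrow> 'n" where e: "inj_on e B"
    using card_le_inj[of B "UNIV::'n set"] finB by auto
  define A :: "'a^'n^'n" where "A = (\<chi> i. if i \<in> e ` B then the_inv_into B e i else 0)"
  have rowsA: "rows A \<subseteq> vec.span B"
  proof
    fix r assume "r \<in> rows A"
    then obtain i where r: "r = row i A" unfolding rows_def by blast
    have rA: "row i A = A $ i" by (simp add: row_def vec_eq_iff)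
    show "r \<in> vec.span B"
    proof (cases "i \<in> e ` B")
      case True
      then have "the_inv_into B e i \<in> B" using the_inv_into_into[OF e] by blast
      then show ?thesis using True r rA by (simp add: A_def vec.span_base)
    next
      case False
      then show ?thesis using r rA by (simp add: A_def vec.span_zero)
    qed
  qed
  have "vec.span (rows A) \<noteq> UNIV"
  proof
    assume "vec.span (rows A) = UNIV"
    then have "vec.span B = UNIV"
      using vec.span_mono[OF rowsA] vec.span_span by (metis top.extremum_uniqueI)
    then have "vec.dim (UNIV::('a^'n) set) = card B"
      by (metis B(2) vec.dim_span vec.dim_span_eq_card_independent)
    moreover have "vec.dim (UNIV::('a^'n) set) = CARD('n)" by (rule vec_dim_card)
    ultimately show False using B(4) assms by simp
  qed
  then obtain x where x: "A *v x = 0" "x \<noteq> 0"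
    unfolding matrix_left_invertible_span_rows_gen[symmetric] matrix_left_invertible_ker by blast
  have "\<forall>b\<in>B. dotK x b = 0"
  proof
    fix b assume b: "b \<in> B"
    have "A $ (e b) = b" using b e by (simp add: A_def the_inv_into_f_f)
    then have "(A *v x) $ (e b) = dotK x b"
      by (simp add: matrix_vector_mult_def dotK_def mult.commute)
    then show "dotK x b = 0" using x(1) by simp
  qed
  then have "vec.span B \<subseteq> {u. dotK x u = 0}"
    by (intro vec.span_minimal dotK_subspace) blast
  then show ?thesis using B(3) x(2) by blast
qed



definition pideal :: "('a::field poly \<Rightarrow> bool) \<Rightarrow> bool" where
  "pideal I \<longleftrightarrow> I 0 \<and> (\<forall>p q. I p \<longrightarrow> I q \<longrightarrow> I (p + q)) \<and> (\<forall>p r. I p \<longrightarrow> I (p * r))"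

lemma pideal_add: "pideal I \<Longrightarrow> I p \<Longrightarrow> I q \<Longrightarrow> I (p + q)"
  by (simp add: pideal_def)
lemma pideal_mult: "pideal I \<Longrightarrow> I p \<Longrightarrow> I (p * r)"
  by (simp add: pideal_def)
lemma pideal_0: "pideal I \<Longrightarrow> I 0"
  by (simp add: pideal_def)

lemma pideal_gen:
  assumes I: "pideal I" and a: "I a" "a \<noteq> 0"
  shows "\<exists>h. I h \<and> h \<noteq> 0 \<and> (\<forall>q. I q \<longrightarrow> h dvd q)"
proof -
  define P where "P = (\<lambda>d. \<exists>h. I h \<and> h \<noteq> 0 \<and> degree h = d)"
  have "P (degree a)" using a by (auto simp: P_def)
  then have "P (LEAST d. P d)" by (rule LeastI)
  then obtain h where h: "I h" "h \<noteq> 0" "degree h = (LEAST d. P d)" unfolding P_def by blast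
  have "h dvd q" if q: "I q" for q
  proof (rule ccontr)
    assume nd: "\<not> h dvd q"
    then have r0: "q mod h \<noteq> 0" by (simp add: mod_eq_0_iff_dvd)
    have eq: "q mod h = q + h * (- (q div h))"
      using div_mult_mod_eq[of q h] by (simp add: algebra_simps)
    have "I (q + h * (- (q div h)))"
      by (rule pideal_add[OF I q pideal_mult[OF I h(1)]])
    then have Ir: "I (q mod h)" by (subst eq)
    have "degree (q mod h) < degree h" using degree_mod_less'[OF h(2) r0] .
    moreover have "P (degree (q mod h))" using Ir r0 by (auto simp: P_def)
    then have "(LEAST d. P d) \<le> degree (q mod h)" by (rule Least_le)
    ultimately show False using h(3) by simp
  qed
  then show ?thesis using h by blast
qed

lemma bezout_irr:
  fixes p q :: "'a::field poly"
  assumes irr: "irreducible p" and nd: "\<not> p dvd q"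
  shows "\<exists>a b. a * p + b * q = 1"
proof -
  define I where "I = (\<lambda>x. \<exists>a b. x = a * p + b * q)"
  have pI: "pideal I"
    unfolding pideal_def I_def
  proof (intro conjI allI impI)
    show "\<exists>a b. 0 = a * p + b * q" by (rule exI[of _ 0], rule exI[of _ 0]) simp
  next
    fix x y assume "\<exists>a b. x = a * p + b * q" "\<exists>a b. y = a * p + b * q"
    then obtain a1 b1 a2 b2 where "x = a1 * p + b1 * q" "y = a2 * p + b2 * q" by blast
    then show "\<exists>a b. x + y = a * p + b * q"
      by (intro exI[of _ "a1 + a2"] exI[of _ "b1 + b2"]) (simp add: algebra_simps)
  next
    fix x r assume "\<exists>a b. x = a * p + b * q"
    then obtain a1 b1 where "x = a1 * p + b1 * q" by blast
    then show "\<exists>a b. x * r = a * p + b * q"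
      by (intro exI[of _ "a1 * r"] exI[of _ "b1 * r"]) (simp add: algebra_simps)
  qed
  have Ip: "I p" unfolding I_def by (intro exI[of _ 1] exI[of _ 0]) simp
  have Iq: "I q" unfolding I_def by (intro exI[of _ 0] exI[of _ 1]) simp
  have p0: "p \<noteq> 0" using irr by (simp add: irreducible_def)
  obtain d where d: "I d" "d \<noteq> 0" "\<And>x. I x \<Longrightarrow> d dvd x"
    using pideal_gen[OF pI Ip p0] by blast
  have "d dvd p" using d(3)[OF Ip] .
  then obtain e where pe: "p = d * e" by (rule dvdE)
  have "is_unit d"
  proof (rule ccontr)
    assume "\<not> is_unit d"
    then have ue: "is_unit e" using irreducibleD[OF irr pe] by blast
    have "d dvd q" using d(3)[OF Iq] .
    then have "d * e dvd q" using mult_unit_dvd_iff[OF ue] by simp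
    then show False using nd pe by simp
  qed
  then obtain k where "1 = d * k" by (auto elim: dvdE)
  then have "I 1" using pideal_mult[OF pI d(1), of k] by simp
  then show ?thesis unfolding I_def by metis
qed

lemma one_mod_prod:
  assumes I: "pideal I" and fin: "finite S" and x: "\<forall>i\<in>S. I (1 - x i)"
  shows "I (1 - prod x S)"
  using fin x
proof (induct S rule: finite_induct)
  case empty
  then show ?case using pideal_0[OF I] by simp
next
  case (insert j S)
  have a: "I (1 - x j)" using insert by simp
  have b: "I (1 - prod x S)" using insert by simp
  have eq: "1 - prod x (insert j S) = (1 - x j) + (1 - prod x S) * x j"
    using insert(1,2) by (simp add: algebra_simps)
  have "I ((1 - x j) + (1 - prod x S) * x j)"
    by (rule pideal_add[OF I a pideal_mult[OF I b]])
  then show ?case by (subst eq)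
qed

lemma one_mod_power:
  assumes I: "pideal I" and x: "I (1 - x)"
  shows "I (1 - x ^ k)"
proof (induct k)
  case 0
  then show ?case using pideal_0[OF I] by simp
next
  case (Suc k)
  have eq: "1 - x ^ Suc k = (1 - x) + (1 - x ^ k) * x" by (simp add: algebra_simps)
  have "I ((1 - x) + (1 - x ^ k) * x)"
    by (rule pideal_add[OF I x pideal_mult[OF I Suc]])
  then show ?case by (subst eq)
qed

lemma common_irr_factor:
  fixes fs :: "nat \<Rightarrow> 'a::field poly" and G :: "nat \<Rightarrow> 'a poly"
  assumes I: "pideal I" and n1: "\<not> I 1" and If: "I (\<Prod>i<s. fs i ^ ms i)"
    and irr: "\<forall>i<s. irreducible (fs i)" and IG: "\<forall>t<m. I (G t)"
  shows "\<exists>i<s. \<forall>t<m. fs i dvd G t"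
proof (rule ccontr)
  assume "\<not> (\<exists>i<s. \<forall>t<m. fs i dvd G t)"
  then have "\<forall>i. \<exists>c. i < s \<longrightarrow> I (1 - c * fs i)"
  proof (intro allI)
    fix i
    show "\<exists>c. i < s \<longrightarrow> I (1 - c * fs i)"
    proof (cases "i < s")
      case True
      with \<open>\<not> (\<exists>i<s. \<forall>t<m. fs i dvd G t)\<close> obtain t where t: "t < m" "\<not> fs i dvd G t" by blast
      obtain a b where ab: "a * fs i + b * G t = 1"
        using bezout_irr[OF _ t(2)] irr True by blast
      have "1 - a * fs i = G t * b" using ab by (simp add: algebra_simps)
      then have "I (1 - a * fs i)" using pideal_mult[OF I] IG t(1) by metis
      then show ?thesis by blast
    qed simp
  qed
  then obtain c where c: "\<forall>i. i < s \<longrightarrow> I (1 - c i * fs i)" by (metis choice)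
  have "\<forall>i\<in>{..<s}. I (1 - (c i * fs i) ^ ms i)"
    using c one_mod_power[OF I] by blast
  then have "I (1 - (\<Prod>i<s. (c i * fs i) ^ ms i))"
    by (rule one_mod_prod[OF I finite_lessThan])
  moreover have "(\<Prod>i<s. (c i * fs i) ^ ms i) = (\<Prod>i<s. fs i ^ ms i) * (\<Prod>i<s. c i ^ ms i)"
    by (simp add: power_mult_distrib prod.distrib mult.commute)
  ultimately have "I (1 - (\<Prod>i<s. fs i ^ ms i) * (\<Prod>i<s. c i ^ ms i))" by simp
  moreover have "I ((\<Prod>i<s. fs i ^ ms i) * (\<Prod>i<s. c i ^ ms i))"
    by (rule pideal_mult[OF I If])
  ultimately have "I ((1 - (\<Prod>i<s. fs i ^ ms i) * (\<Prod>i<s. c i ^ ms i)) +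
        (\<Prod>i<s. fs i ^ ms i) * (\<Prod>i<s. c i ^ ms i))"
    by (rule pideal_add[OF I])
  then show False using n1 by simp
qed



lemma dotL_add: "dotL \<phi> w (x + y) = dotL \<phi> w x + dotL \<phi> w y"
  by (simp add: dotL_def distrib_left sum.distrib)

lemma dotL_zero: "dotL \<phi> w 0 = 0"
  by (simp add: dotL_def)

lemma dotL_sum: "dotL \<phi> w (sum f S) = (\<Sum>x\<in>S. dotL \<phi> w (f x))"
  by (induct S rule: infinite_finite_induct) (simp_all add: dotL_zero dotL_add)

lemma dotL_mat: "dotL \<phi> w (mat c *v y) = c * dotL \<phi> w y"
proof -
  have "mat c *v y = (\<chi> j. c * y $ j)"
    by (simp add: mat_def matrix_vector_mult_def vec_eq_iff if_distrib if_distribR sum.delta cong: if_cong)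
  then show ?thesis by (simp add: dotL_def sum_distrib_left mult_ac)
qed

lemma dotL_map_vec:
  assumes fe: "field_embedding \<phi>"
  shows "dotL \<phi> w (map_vec \<phi> u) = \<phi> (dotK w u)"
  by (simp add: dotL_def dotK_def map_vec_def fe_sum[OF fe] fe_mult[OF fe])

lemma matrix_vector_sum: "(sum A S) *v (v::'a::comm_ring_1^'n) = (\<Sum>i\<in>S. A i *v v)"
  by (induct S rule: infinite_finite_induct) (simp_all add: matrix_vector_mult_add_rdistrib)

lemma mult_axis_col: "((F::'a::comm_ring_1^'n^'m) *v axis k 1) $ j = F $ j $ k"
  by (simp add: matrix_vector_mult_def axis_def if_distrib sum.delta' cong: if_cong)

lemma dotL_map_zero:
  assumes fe: "field_embedding \<phi>" and w: "\<forall>y. dotK w (F *v y) = 0"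
  shows "dotL \<phi> w (map_mat \<phi> F *v y) = 0"
proof -
  have "dotL \<phi> w (map_mat \<phi> F *v y) = (\<Sum>j\<in>UNIV. \<Sum>k\<in>UNIV. \<phi> (w$j) * (\<phi> (F$j$k) * y$k))"
    by (simp add: dotL_def map_mat_def matrix_vector_mult_def sum_distrib_left)
  also have "\<dots> = (\<Sum>k\<in>UNIV. \<Sum>j\<in>UNIV. \<phi> (w$j) * (\<phi> (F$j$k) * y$k))"
    by (rule sum.swap)
  also have "\<dots> = (\<Sum>k\<in>UNIV. \<phi> (dotK w (F *v axis k 1)) * y$k)"
    by (rule sum.cong[OF refl])
      (simp add: dotK_def mult_axis_col fe_sum[OF fe] fe_mult[OF fe] sum_distrib_left sum_distrib_right mult_ac)
  also have "\<dots> = 0" using w by (simp add: fe_0[OF fe])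
  finally show ?thesis .
qed

lemma dotK_add: "dotK w (x + y) = dotK w x + dotK w y"
  by (simp add: dotK_def distrib_left sum.distrib)

lemma dotK_zero[simp]: "dotK w 0 = 0"
  by (simp add: dotK_def)

lemma dotK_scale: "dotK w (c *s x) = c * dotK w x"
  by (simp add: dotK_def sum_distrib_left mult_ac)

lemma dotK_mat_subspace: "vec.subspace {y. dotK w ((P::'a::field^'n^'n) *v y) = 0}"
  unfolding vec.subspace_def
  by (simp add: matrix_vector_right_distrib dotK_add vector_scalar_commute dotK_scale)

lemma poly_coords_dec:
  assumes fe: "field_embedding \<phi>" and basis: "is_K_basis \<phi> b m"
  shows "g = (\<Sum>t<m. smult (b t) (map_poly \<phi> (\<Sum>i\<le>degree g. monom (coords \<phi> b m (coeff g i) t) i)))"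
proof (rule poly_eqI)
  fix j
  have c: "coeff (\<Sum>i\<le>degree g. monom (coords \<phi> b m (coeff g i) t) i) j =
        (if j \<le> degree g then coords \<phi> b m (coeff g j) t else 0)" for t
    by (simp add: coeff_sum coeff_monom)
  show "coeff g j = coeff (\<Sum>t<m. smult (b t) (map_poly \<phi> (\<Sum>i\<le>degree g. monom (coords \<phi> b m (coeff g i) t) i))) j"
  proof (cases "j \<le> degree g")
    case True
    have "coeff g j = (\<Sum>t<m. \<phi> (coords \<phi> b m (coeff g j) t) * b t)"
      using coords_spec[OF basis] by blast
    then show ?thesis using True
      by (simp add: coeff_sum coeff_map_poly fe_0[OF fe] c mult.commute)
  next
    case False
    then show ?thesis
      by (simp add: coeff_sum coeff_map_poly fe_0[OF fe] c coeff_eq_0)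
  qed
qed



lemma gdec_dot:
  fixes M :: "'a::field^'n^'n" and \<phi> :: "'a \<Rightarrow> 'b::field"
  assumes fe: "field_embedding \<phi>"
    and gd: "g = (\<Sum>t<m. smult (b t) (map_poly \<phi> (Gp t)))"
  shows "dotL \<phi> w ((poly_mat (monom 1 j) (map_mat \<phi> M) ** poly_mat g (map_mat \<phi> M)) *v map_vec \<phi> v)
     = (\<Sum>t<m. \<phi> (dotK w ((mat_pow M j ** poly_mat (Gp t) M) *v v)) * b t)"
proof -
  have pg: "poly_mat g (map_mat \<phi> M) = (\<Sum>t<m. mat (b t) ** map_mat \<phi> (poly_mat (Gp t) M))"
    unfolding gd poly_mat_sum poly_mat_smult poly_mat_map[OF fe] by (rule refl)
  have pj: "poly_mat (monom 1 j) (map_mat \<phi> M) = map_mat \<phi> (mat_pow M j)"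
    by (simp add: poly_mat_monom map_mat_pow[OF fe])
  have "poly_mat (monom 1 j) (map_mat \<phi> M) ** poly_mat g (map_mat \<phi> M)
      = (\<Sum>t<m. mat (b t) ** map_mat \<phi> (mat_pow M j ** poly_mat (Gp t) M))"
    unfolding pg pj matrix_mul_sum mat_comm2 map_mat_mult[OF fe] by (rule refl)
  then have "(poly_mat (monom 1 j) (map_mat \<phi> M) ** poly_mat g (map_mat \<phi> M)) *v map_vec \<phi> v
      = (\<Sum>t<m. mat (b t) *v map_vec \<phi> ((mat_pow M j ** poly_mat (Gp t) M) *v v))"
    by (simp only: matrix_vector_sum matrix_vector_mul_assoc[symmetric] map_mat_vec[OF fe])
  then show ?thesis
    by (simp add: dotL_sum dotL_mat dotL_map_vec[OF fe] mult.commute)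
qed



theorem corollary4:
  fixes \<phi> :: "'k::field \<Rightarrow> 'l::field"
    and b :: "nat \<Rightarrow> 'l" and m :: nat
    and M :: "'k^'n^'n" and v :: "'k^'n"
    and f :: "'k poly" and s :: nat and fs :: "nat \<Rightarrow> 'k poly" and ms :: "nat \<Rightarrow> nat"
    and C :: "('l^'n) set" and k :: nat and g :: "'l poly"
  assumes emb: "field_embedding \<phi>"
    and basis: "is_K_basis \<phi> b m"
    and deg: "m \<ge> CARD('n)"
    and cyc: "cyclic_matrix M"
    and minpol: "minimal_polynomial M f"
    and fact: "f = (\<Prod>i<s. fs i ^ ms i)"
    and irr: "\<forall>i<s. lead_coeff (fs i) = 1 \<and> irreducible (fs i)"
    and dist: "inj_on fs {..<s}"
    and mult: "\<forall>i<s. ms i \<ge> 1"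
    and code: "M_cyclic_code \<phi> M C"
    and nonzero: "C \<noteq> {0}"
    and dimC: "vec.dim C = k"
    and cv: "cyclic_vector M v"
    and gen: "generator_polynomial \<phi> M v f C g"
  shows "Mr \<phi> b m k C = CARD('n) \<longleftrightarrow> (\<forall>i<s. \<not> map_poly \<phi> (fs i) dvd g)"
proof -
  define W where "W = vec.span (\<Union>c\<in>C. Rsupp \<phi> b m c)"
  have subC: "vec.subspace C" using code by (simp add: M_cyclic_code_def)
  have Mr_eq: "Mr \<phi> b m k C = vec.dim W"
  proof -
    have "{wtR \<phi> b m D | D. vec.subspace D \<and> D \<subseteq> C \<and> vec.dim D = k} = {wtR \<phi> b m C}"
    proof safe
      fix D assume D: "vec.subspace D" "D \<subseteq> C" "k = vec.dim D"
      have "vec.span D = vec.span C"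
        using vec.dim_eq_span[OF D(2)] D(3) dimC by simp
      then have "D = C" using D(1) subC by (simp add: vec.span_eq_iff[THEN iffD2])
      then show "wtR \<phi> b m D = wtR \<phi> b m C" by simp
    next
      show "\<exists>D. wtR \<phi> b m C = wtR \<phi> b m D \<and> vec.subspace D \<and> D \<subseteq> C \<and> vec.dim D = k"
        using subC dimC by blast
    qed
    then show ?thesis by (simp add: Mr_def wtR_def W_def)
  qed
  have dimW_le: "vec.dim W \<le> CARD('n)" by (rule dim_subset_UNIV_cart_gen)
  have f0: "f \<noteq> 0" using minpol by (auto simp: minimal_polynomial_def)
  have fM: "poly_mat f M = 0" using minpol by (simp add: minimal_polynomial_def)
  have Cgen: "C = {(poly_mat P (map_mat \<phi> M) ** poly_mat g (map_mat \<phi> M)) *v map_vec \<phi> v | P. True}"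
    using gen by (simp add: generator_polynomial_def code_of_gen_def)
  show ?thesis
  proof
    assume Mn: "Mr \<phi> b m k C = CARD('n)"
    show "\<forall>i<s. \<not> map_poly \<phi> (fs i) dvd g"
    proof (intro allI impI notI)
      fix i assume i: "i < s" and dv: "map_poly \<phi> (fs i) dvd g"
      have "ms i \<noteq> 0" using mult i by auto
      then have "fs i ^ ms i = fs i * fs i ^ (ms i - 1)" by (cases "ms i") auto
      then have "fs i dvd fs i ^ ms i" by simp
      also have "\<dots> dvd f" unfolding fact using i by (intro dvd_prodI) auto
      finally obtain r where r: "f = fs i * r" by (rule dvdE)
      have notinv: "\<not> (\<exists>G. G ** poly_mat (fs i) M = mat 1)"
      proof
        assume "\<exists>G. G ** poly_mat (fs i) M = mat 1"
        then obtain G where G: "G ** poly_mat (fs i) M = mat 1" by blast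
        have FR: "poly_mat (fs i) M ** poly_mat r M = 0"
          using fM r poly_mat_mult[of "fs i" r M] by simp
        have "poly_mat r M = (G ** poly_mat (fs i) M) ** poly_mat r M" by (simp add: G)
        also have "\<dots> = G ** (poly_mat (fs i) M ** poly_mat r M)" by (simp add: matrix_mul_assoc)
        also have "\<dots> = 0" by (simp add: FR)
        finally have "f dvd r" using minpol by (simp add: minimal_polynomial_def)
        have r0: "r \<noteq> 0" using f0 r by auto
        have fi0: "fs i \<noteq> 0" using irr i by (auto simp: irreducible_def)
        have "\<not> is_unit (fs i)" using irr i by (auto simp: irreducible_def)
        then have "degree (fs i) \<noteq> 0" using is_unit_iff_degree[OF fi0] by simp
        moreover have "degree f = degree (fs i) + degree r"
          using r fi0 r0 by (simp add: degree_mult_eq)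
        moreover have "degree f \<le> degree r" using dvd_imp_degree_le[OF \<open>f dvd r\<close> r0] .
        ultimately show False by simp
      qed
      obtain w where w: "w \<noteq> 0" "\<forall>y. dotK w (poly_mat (fs i) M *v y) = 0"
        using left_kernel[OF notinv] by blast
      have perpC: "\<forall>c\<in>C. dotL \<phi> w c = 0"
      proof
        fix c assume "c \<in> C"
        then obtain P where c: "c = (poly_mat P (map_mat \<phi> M) ** poly_mat g (map_mat \<phi> M)) *v map_vec \<phi> v"
          using Cgen by blast
        obtain q where q: "g = map_poly \<phi> (fs i) * q" using dv by (rule dvdE)
        have "poly_mat P (map_mat \<phi> M) ** poly_mat g (map_mat \<phi> M)
            = poly_mat (map_poly \<phi> (fs i) * (q * P)) (map_mat \<phi> M)"
          by (simp add: poly_mat_mult[symmetric] q mult_ac)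
        also have "\<dots> = map_mat \<phi> (poly_mat (fs i) M) ** poly_mat (q * P) (map_mat \<phi> M)"
          by (simp add: poly_mat_mult poly_mat_map[OF emb])
        finally have "c = map_mat \<phi> (poly_mat (fs i) M) *v (poly_mat (q * P) (map_mat \<phi> M) *v map_vec \<phi> v)"
          by (simp add: c matrix_vector_mul_assoc)
        then show "dotL \<phi> w c = 0" using dotL_map_zero[OF emb w(2)] by simp
      qed
      have WZ: "W \<subseteq> {u. dotK w u = 0}"
        unfolding W_def by (rule perp_span[OF emb basis perpC])
      have "vec.dim W = CARD('n)" using Mn Mr_eq by simp
      then have "vec.dim (UNIV::('k^'n) set) \<le> vec.dim W" using vec_dim_card[where 'a='k and 'n='n] by simp
      then have "vec.span W = vec.span (UNIV::('k^'n) set)"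
        by (intro vec.dim_eq_span) auto
      then have "vec.span W = UNIV" by simp
      then have WU: "W = UNIV" unfolding W_def by (simp add: vec.span_span)
      obtain j where j: "w $ j \<noteq> 0" using w(1) by (auto simp: vec_eq_iff)
      have "dotK w (axis j 1) = 0" using WZ WU by blast
      then show False using j by (simp add: dotK_axis)
    qed
  next
    assume nd: "\<forall>i<s. \<not> map_poly \<phi> (fs i) dvd g"
    show "Mr \<phi> b m k C = CARD('n)"
    proof (rule ccontr)
      assume "Mr \<phi> b m k C \<noteq> CARD('n)"
      then have "vec.dim W < CARD('n)" using Mr_eq dimW_le by simp
      then obtain w where w: "w \<noteq> 0" "\<forall>u\<in>W. dotK w u = 0" using perp_exists by blast
      have WZ: "vec.span (\<Union>c\<in>C. Rsupp \<phi> b m c) \<subseteq> {u. dotK w u = 0}"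
        using w(2) unfolding W_def by blast
      have perpC: "\<forall>c\<in>C. dotL \<phi> w c = 0"
        using perp_code[OF emb basis WZ] by blast
      define Jp where "Jp = (\<lambda>q. \<forall>y. dotK w (poly_mat q M *v y) = 0)"
      have pJ: "pideal Jp"
        unfolding pideal_def Jp_def
        by (simp add: poly_mat_add matrix_vector_mult_add_rdistrib dotK_add poly_mat_mult
            matrix_vector_mul_assoc[symmetric])
      have n1: "\<not> Jp 1"
      proof
        assume "Jp 1"
        then have "\<forall>j. dotK w (axis j 1) = 0" by (simp add: Jp_def)
        then have "w = 0" by (simp add: dotK_axis vec_eq_iff)
        then show False using w(1) by simp
      qed
      have Jf: "Jp (\<Prod>i<s. fs i ^ ms i)" using fM fact by (simp add: Jp_def)
      define Gp where "Gp = (\<lambda>t. \<Sum>i\<le>degree g. monom (coords \<phi> b m (coeff g i) t) i)"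
      have gdec: "g = (\<Sum>t<m. smult (b t) (map_poly \<phi> (Gp t)))"
        unfolding Gp_def by (rule poly_coords_dec[OF emb basis])
      have JG: "\<forall>t<m. Jp (Gp t)"
      proof (intro allI impI)
        fix t assume t: "t < m"
        have a: "dotK w ((mat_pow M j ** poly_mat (Gp t) M) *v v) = 0" for j
        proof -
          have mem: "(poly_mat (monom 1 j) (map_mat \<phi> M) ** poly_mat g (map_mat \<phi> M)) *v map_vec \<phi> v \<in> C"
            unfolding Cgen by (rule CollectI, rule exI[of _ "monom 1 j"], simp)
          have d0: "dotL \<phi> w ((poly_mat (monom 1 j) (map_mat \<phi> M) ** poly_mat g (map_mat \<phi> M)) *v map_vec \<phi> v) = 0"
            using perpC mem by blast
          have eq: "dotL \<phi> w ((poly_mat (monom 1 j) (map_mat \<phi> M) ** poly_mat g (map_mat \<phi> M)) *v map_vec \<phi> v)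
             = (\<Sum>t<m. \<phi> (dotK w ((mat_pow M j ** poly_mat (Gp t) M) *v v)) * b t)"
            by (rule gdec_dot[OF emb gdec])
          have "(\<Sum>t<m. \<phi> (dotK w ((mat_pow M j ** poly_mat (Gp t) M) *v v)) * b t) = 0"
            using d0 unfolding eq .
          from coords_unique0[OF emb basis this t] show ?thesis .
        qed
        have "(\<lambda>i. mat_pow M i *v v) ` {..<CARD('n)} \<subseteq> {y. dotK w (poly_mat (Gp t) M *v y) = 0}"
        proof safe
          fix j
          have "mat_pow M j ** poly_mat (Gp t) M = poly_mat (Gp t) M ** mat_pow M j"
            using poly_mat_comm[of "monom 1 j" M "Gp t"] by (simp add: poly_mat_monom)
          then show "dotK w (poly_mat (Gp t) M *v (mat_pow M j *v v)) = 0"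
            using a[of j] by (simp add: matrix_vector_mul_assoc)
        qed
        then have "vec.span ((\<lambda>i. mat_pow M i *v v) ` {..<CARD('n)}) \<subseteq> {y. dotK w (poly_mat (Gp t) M *v y) = 0}"
          by (rule vec.span_minimal[OF _ dotK_mat_subspace])
        then show "Jp (Gp t)" using cv by (auto simp: Jp_def cyclic_vector_def)
      qed
      have irr': "\<forall>i<s. irreducible (fs i)" using irr by blast
      obtain i where i: "i < s" "\<forall>t<m. fs i dvd Gp t"
        using common_irr_factor[OF pJ n1 Jf irr' JG] by blast
      have "map_poly \<phi> (fs i) dvd g"
        unfolding gdec
        by (intro dvd_sum dvd_smult) (use i(2) map_poly_dvd[OF emb] in blast)
      then show False using nd i(1) by blast
    qed
  qed
qed


end
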